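(* Let $c>0$, $n=2^k$ with $ck$ an integer, and let $G$ be a graph on vertex set $\{0,1\}^k$ with property P: for every $U\subseteq V(G)$ with $|U|\le\tfrac13k$ and every pattern $p$ with $|p|\le\tfrac13k$, some vertex of $N(U)$ is consistent with $p$. Then in the Prover–Adversary game on $\mathrm{Clique}(G)$ the Adversary has a strategy that wins against any Prover who uses at most $\tfrac19k^2$ memory locations.
   Context: A pattern is $p\in\{*,0,1\}^k$; $p$ is consistent with vertex $v=v_1\cdots v_k$ if $p_i\in\{v_i,*\}$ for all $i$; $|p|$ is the number of non-$*$ positions. $N(U)=\bigcap_{v\in U}\{u:\{u,v\}\in E(G)\}$. $\mathrm{Clique}(G)$ is the CNF with variables $x^i_b$ ($i\in[ck]$, $b\in[k]$), writing $(x^i_b\ne v_b)$ for $\neg x^i_b$ if $v_b=1$ and $x^i_b$ if $v_b=0$, with clauses: for each vertex $v$ and distinct $i,j\in[ck]$, $\bigvee_b(x^i_b\ne v_b)\lor\bigvee_b(x^j_b\ne v_b)$; and for each pair of distinct vertices $u,v$ with $\{u,v\}\notin E(G)$ and distinct $i,j$, $\bigvee_b(x^i_b\ne u_b)\lor\bigvee_b(x^j_b\ne v_b)$. It is satisfiable iff $G$ has a clique of size $ck$. The Prover–Adversary game on a CNF $\phi$: the Prover holds a partial assignment in memory (each assigned variable occupies one memory location), initially empty. In each round the Prover either queries a variable, whose value the Adversary supplies and the Prover stores, or deletes a stored value (a deleted variable may later be queried again and answered differently). The Prover wins when the stored partial assignment falsifies some clause of $\phi$; the Adversary wins if the game continues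 forever. A Prover using at most $M$ memory locations never stores more than $M$ values simultaneously. *)

theory Defs
  imports Main Complex_Main
begin

text \<open>Vertices of \<open>{0,1}^k\<close> are boolean lists of length k (True = 1).\<close>
definition vertices :: "nat \<Rightarrow> bool list set" where
  "vertices k = {v. length v = k}"

text \<open>A pattern in \<open>{*,0,1}^k\<close>: None = *, Some b = b.\<close>
definition patterns :: "nat \<Rightarrow> bool option list set" where
  "patterns k = {p. length p = k}"

definition consistent :: "bool option list \<Rightarrow> bool list \<Rightarrow> bool" where
  "consistent p v \<longleftrightarrow> length p = length v \<and>
     (\<forall>i < length p. p ! i = None \<or> p ! i = Some (v ! i))"

definition pattern_size :: "bool option list \<Rightarrow> nat" where
  "pattern_size p = card {i. i < length p \<and> p ! i \<noteq> None}"

definition is_graph :: "nat \<Rightarrow> (bool list \<Rightarrow> bool list \<Rightarrow> bool) \<Rightarrow> bool" where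
  "is_graph k E \<longleftrightarrow> (\<forall>u \<in> vertices k. \<forall>v \<in> vertices k. E u v \<longleftrightarrow> E v u) \<and>
                     (\<forall>v \<in> vertices k. \<not> E v v)"

definition common_nbhd :: "nat \<Rightarrow> (bool list \<Rightarrow> bool list \<Rightarrow> bool) \<Rightarrow> bool list set \<Rightarrow> bool list set" where
  "common_nbhd k E U = {u \<in> vertices k. \<forall>v \<in> U. E u v}"

definition propertyP :: "nat \<Rightarrow> (bool list \<Rightarrow> bool list \<Rightarrow> bool) \<Rightarrow> bool" where
  "propertyP k E \<longleftrightarrow>
     (\<forall>U. U \<subseteq> vertices k \<longrightarrow> real (card U) \<le> real k / 3 \<longrightarrow>
        (\<forall>p \<in> patterns k. real (pattern_size p) \<le> real k / 3 \<longrightarrow>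
           (\<exists>u \<in> common_nbhd k E U. consistent p u)))"

text \<open>A literal is a pair (x, b), true iff variable x has value b; a clause is a set of literals.
  Variable \<open>x^i_b\<close> is the pair (i, b) (0-based indices: i < ck, b < k).\<close>
type_synonym 'v clause = "('v \<times> bool) set"

definition falsifies :: "('v \<Rightarrow> bool option) \<Rightarrow> 'v clause \<Rightarrow> bool" where
  "falsifies \<rho> C \<longleftrightarrow> (\<forall>(x, b) \<in> C. \<rho> x = Some (\<not> b))"

definition pair_clause :: "nat \<Rightarrow> nat \<Rightarrow> bool list \<Rightarrow> nat \<Rightarrow> bool list \<Rightarrow> (nat \<times> nat) clause" where
  "pair_clause k i u j v =
     {((i, b), \<not> (u ! b)) | b. b < k} \<union> {((j, b), \<not> (v ! b)) | b. b < k}"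

definition clique_cnf :: "nat \<Rightarrow> nat \<Rightarrow> (bool list \<Rightarrow> bool list \<Rightarrow> bool) \<Rightarrow> (nat \<times> nat) clause set" where
  "clique_cnf k m E =
     {pair_clause k i v j v | v i j. v \<in> vertices k \<and> i < m \<and> j < m \<and> i \<noteq> j}
   \<union> {pair_clause k i u j v | u v i j. u \<in> vertices k \<and> v \<in> vertices k \<and> u \<noteq> v \<and> \<not> E u v
                                  \<and> i < m \<and> j < m \<and> i \<noteq> j}"

datatype 'v move = Query 'v | Delete 'v
datatype 'v event = Queried 'v bool | Deleted 'v

type_synonym 'v prover = "'v event list \<Rightarrow> 'v move"
type_synonym 'v adversary = "'v event list \<Rightarrow> 'v \<Rightarrow> bool"

fun apply_event :: "('v \<Rightarrow> bool option) \<Rightarrow> 'v event \<Rightarrow> ('v \<Rightarrow> bool option)" where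
  "apply_event \<rho> (Queried x b) = \<rho>(x := Some b)"
| "apply_event \<rho> (Deleted x) = \<rho>(x := None)"

definition memory :: "'v event list \<Rightarrow> ('v \<Rightarrow> bool option)" where
  "memory h = foldl apply_event Map.empty h"

fun respond :: "'v adversary \<Rightarrow> 'v event list \<Rightarrow> 'v move \<Rightarrow> 'v event" where
  "respond A h (Query x) = Queried x (A h x)"
| "respond A h (Delete x) = Deleted x"

primrec play :: "'v prover \<Rightarrow> 'v adversary \<Rightarrow> nat \<Rightarrow> 'v event list" where
  "play P A 0 = []"
| "play P A (Suc t) = play P A t @ [respond A (play P A t) (P (play P A t))]"

definition prover_wins_at :: "'v clause set \<Rightarrow> 'v prover \<Rightarrow> 'v adversary \<Rightarrow> nat \<Rightarrow> bool" where
  "prover_wins_at \<phi> P A t \<longleftrightarrow> (\<exists>C \<in> \<phi>. falsifies (memory (play P A t)) C)"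

definition memory_bounded :: "'v clause set \<Rightarrow> real \<Rightarrow> 'v prover \<Rightarrow> 'v adversary \<Rightarrow> bool" where
  "memory_bounded \<phi> M P A \<longleftrightarrow>
     (\<forall>t. (\<forall>s < t. \<not> prover_wins_at \<phi> P A s) \<longrightarrow> real (card (dom (memory (play P A t)))) \<le> M)"

definition adversary_wins :: "'v clause set \<Rightarrow> 'v prover \<Rightarrow> 'v adversary \<Rightarrow> bool" where
  "adversary_wins \<phi> P A \<longleftrightarrow> (\<forall>t. \<not> prover_wins_at \<phi> P A t)"

end

theory Submission
  imports Defs
begin

type_synonym mem = "nat \<times> nat \<Rightarrow> bool option"
type_synonym asgn = "nat \<Rightarrow> bool list option"

definition sz :: "nat \<Rightarrow> mem \<Rightarrow> nat \<Rightarrow> nat" where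
  "sz k \<rho> i = card {b. b < k \<and> \<rho> (i, b) \<noteq> None}"

definition pat :: "nat \<Rightarrow> mem \<Rightarrow> nat \<Rightarrow> bool option list" where
  "pat k \<rho> i = map (\<lambda>b. \<rho> (i, b)) [0..<k]"

definition others :: "asgn \<Rightarrow> nat \<Rightarrow> bool list set" where
  "others a i = {w. \<exists>j. j \<noteq> i \<and> a j = Some w}"

definition chooseV where
  "chooseV k E a \<rho> i = (SOME w. w \<in> common_nbhd k E (others a i) \<and> consistent (pat k \<rho> i) w)"

definition trig :: "nat \<Rightarrow> asgn \<Rightarrow> mem \<Rightarrow> nat \<times> nat \<Rightarrow> bool" where
  "trig k a \<rho> x = (a (fst x) = None \<and> snd x < k \<and> \<rho> x = None \<and> real k / 3 < real (sz k \<rho> (fst x) + 1))"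

definition nasg where
  "nasg k E a \<rho> x = (if trig k a \<rho> x then a(fst x := Some (chooseV k E a \<rho> (fst x))) else a)"

definition ans where
  "ans k E a \<rho> x = (case nasg k E a \<rho> x (fst x) of None \<Rightarrow> False | Some w \<Rightarrow> w ! snd x)"

definition delA :: "nat \<Rightarrow> mem \<Rightarrow> nat \<times> nat \<Rightarrow> asgn \<Rightarrow> asgn" where
  "delA k \<rho> x a = (if real (sz k \<rho> (fst x)) \<le> real k / 3 then a(fst x := None) else a)"

fun stp where
  "stp k E (a, \<rho>) (Queried x v) = (nasg k E a \<rho> x, \<rho>(x := Some v))"
| "stp k E (a, \<rho>) (Deleted x) = (delA k (\<rho>(x := None)) x a, \<rho>(x := None))"

definition advS where
  "advS k E h = foldl (stp k E) (\<lambda>_. None, Map.empty) h"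

definition adv :: "nat \<Rightarrow> (bool list \<Rightarrow> bool list \<Rightarrow> bool) \<Rightarrow> (nat \<times> nat) adversary" where
  "adv k E h x = ans k E (fst (advS k E h)) (snd (advS k E h)) x"

definition Inv where
  "Inv k E a \<rho> \<longleftrightarrow> finite (dom \<rho>) \<and>
     (\<forall>i w. a i = Some w \<longrightarrow> w \<in> vertices k \<and> (\<forall>b<k. \<rho> (i, b) = None \<or> \<rho> (i, b) = Some (w ! b))
        \<and> real k / 3 < real (sz k \<rho> i)) \<and>
     (\<forall>i. a i = None \<longrightarrow> real (sz k \<rho> i) \<le> real k / 3) \<and>
     (\<forall>i j u v. i \<noteq> j \<longrightarrow> a i = Some u \<longrightarrow> a j = Some v \<longrightarrow> E u v)"

lemma snd_stp: "snd (stp k E s e) = apply_event (snd s) e"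
  by (cases s; cases e) auto

lemma advS_mem: "snd (advS k E h) = memory h"
proof (induction h rule: rev_induct)
  case Nil then show ?case by (simp add: advS_def memory_def)
next
  case (snoc e h)
  then show ?case by (simp add: advS_def memory_def snd_stp)
qed

lemma sz_le: "sz k \<rho> i \<le> k"
proof -
  have "{b. b < k \<and> \<rho> (i, b) \<noteq> None} \<subseteq> {..<k}" by auto
  then show ?thesis unfolding sz_def by (metis card_lessThan card_mono finite_lessThan)
qed

lemma sz_other: "j \<noteq> i \<Longrightarrow> sz k (\<rho>((i, b) := y)) j = sz k \<rho> j"
  unfolding sz_def by simp

lemma sz_mono: "(\<And>b. b < k \<Longrightarrow> \<rho> (i, b) \<noteq> None \<Longrightarrow> \<rho>' (i, b) \<noteq> None) \<Longrightarrow> sz k \<rho> i \<le> sz k \<rho>' i"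
  unfolding sz_def by (rule card_mono) auto

lemma sz_ins: "b < k \<Longrightarrow> \<rho> (i, b) = None \<Longrightarrow> sz k (\<rho>((i, b) := Some v)) i = sz k \<rho> i + 1"
proof -
  assume a: "b < k" "\<rho> (i, b) = None"
  have "{b'. b' < k \<and> (\<rho>((i, b) := Some v)) (i, b') \<noteq> None} = insert b {b'. b' < k \<and> \<rho> (i, b') \<noteq> None}"
    using a by auto
  then show ?thesis unfolding sz_def using a by simp
qed

lemma sz_same: "\<not> (b < k \<and> \<rho> (i, b) = None) \<Longrightarrow> sz k (\<rho>((i, b) := Some v)) i = sz k \<rho> i"
proof -
  assume a: "\<not> (b < k \<and> \<rho> (i, b) = None)"
  have "{b'. b' < k \<and> (\<rho>((i, b) := Some v)) (i, b') \<noteq> None} = {b'. b' < k \<and> \<rho> (i, b') \<noteq> None}"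
    using a by auto
  then show ?thesis unfolding sz_def by simp
qed

lemma count_assigned:
  assumes inv: "Inv k E a \<rho>" and bd: "real (card (dom \<rho>)) \<le> real k ^ 2 / 9"
  shows "real (card {i. a i \<noteq> None}) \<le> real k / 3"
proof (cases "{i. a i \<noteq> None} = {}")
  case True then show ?thesis by simp
next
  case False
  define I where "I = {i. a i \<noteq> None}"
  define S where "S i = {b. b < k \<and> \<rho> (i, b) \<noteq> None}" for i
  have fin: "finite (dom \<rho>)" using inv by (simp add: Inv_def)
  have big: "real k / 3 < real (sz k \<rho> i)" if "i \<in> I" for i
    using inv that unfolding Inv_def I_def by auto
  have "I \<subseteq> fst ` dom \<rho>"
  proof
    fix i assume i: "i \<in> I"
    have "sz k \<rho> i \<noteq> 0" using big[OF i] by (metis of_nat_0 divide_nonneg_pos of_nat_0_le_iff zero_less_numeral not_less)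
    then have "S i \<noteq> {}" unfolding sz_def S_def by (metis card.empty)
    then obtain b where "\<rho> (i, b) \<noteq> None" unfolding S_def by auto
    then show "i \<in> fst ` dom \<rho>" by force
  qed
  then have finI: "finite I" using fin finite_surj by blast
  have finS: "\<forall>i\<in>I. finite (S i)" unfolding S_def by auto
  have "Sigma I S \<subseteq> dom \<rho>" unfolding S_def by auto
  then have "card (Sigma I S) \<le> card (dom \<rho>)" using fin card_mono by blast
  then have sumle: "(\<Sum>i\<in>I. card (S i)) \<le> card (dom \<rho>)" using card_SigmaI[OF finI finS] by simp
  have ne: "I \<noteq> {}" using False I_def by simp
  have "real (card I) * (real k / 3) = (\<Sum>i\<in>I. real k / 3)" by simp
  also have "\<dots> < (\<Sum>i\<in>I. real (card (S i)))"
    using sum_strict_mono[OF finI ne, of "\<lambda>_. real k / 3" "\<lambda>i. real (card (S i))"] big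
    unfolding sz_def S_def by auto
  also have "\<dots> \<le> real (card (dom \<rho>))" using sumle by (metis of_nat_le_iff of_nat_sum)
  also have "\<dots> \<le> (real k / 3) * (real k / 3)" using bd by (simp add: power2_eq_square)
  finally have "real (card I) * (real k / 3) < (real k / 3) * (real k / 3)" .
  then have "real (card I) < real k / 3"
    by (metis mult_less_cancel_right_pos mult_right_less_imp_less of_nat_0_le_iff divide_nonneg_pos zero_less_numeral less_eq_real_def mult_less_cancel_right)
  then show ?thesis unfolding I_def by simp
qed


lemma fin_assigned: "Inv k E a \<rho> \<Longrightarrow> finite {i. a i \<noteq> None}"
proof -
  assume inv: "Inv k E a \<rho>"
  have fin: "finite (dom \<rho>)" using inv by (simp add: Inv_def)
  have "{i. a i \<noteq> None} \<subseteq> fst ` dom \<rho>"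
  proof
    fix i assume i: "i \<in> {i. a i \<noteq> None}"
    have big: "real k / 3 < real (sz k \<rho> i)" using inv i unfolding Inv_def by auto
    have "sz k \<rho> i \<noteq> 0" using big by (metis of_nat_0 divide_nonneg_pos of_nat_0_le_iff zero_less_numeral not_less)
    then have "{b. b < k \<and> \<rho> (i, b) \<noteq> None} \<noteq> {}" unfolding sz_def by (metis card.empty)
    then obtain b where "\<rho> (i, b) \<noteq> None" by auto
    then show "i \<in> fst ` dom \<rho>" by force
  qed
  then show ?thesis using fin finite_surj by blast
qed

lemma pat_size: "pattern_size (pat k \<rho> i) = sz k \<rho> i"
proof -
  have "{j. j < length (pat k \<rho> i) \<and> pat k \<rho> i ! j \<noteq> None} = {b. b < k \<and> \<rho> (i, b) \<noteq> None}"
    unfolding pat_def by auto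
  then show ?thesis unfolding pattern_size_def sz_def by simp
qed

lemma pat_pat: "pat k \<rho> i \<in> patterns k"
  unfolding patterns_def pat_def by simp

lemma pat_cons: "consistent (pat k \<rho> i) w \<longleftrightarrow> length w = k \<and> (\<forall>b<k. \<rho> (i, b) = None \<or> \<rho> (i, b) = Some (w ! b))"
  unfolding consistent_def pat_def by auto

lemma choose_ok:
  assumes inv: "Inv k E a \<rho>" and bd: "real (card (dom \<rho>)) \<le> real k ^ 2 / 9"
    and P: "propertyP k E" and ai: "a i = None"
  shows "chooseV k E a \<rho> i \<in> common_nbhd k E (others a i) \<and> consistent (pat k \<rho> i) (chooseV k E a \<rho> i)"
proof -
  have U: "others a i \<subseteq> vertices k" using inv unfolding Inv_def others_def by auto
  have finA: "finite {j. a j \<noteq> None}" using fin_assigned[OF inv] .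
  have "others a i \<subseteq> (the \<circ> a) ` {j. a j \<noteq> None}" unfolding others_def by force
  then have "card (others a i) \<le> card ((the \<circ> a) ` {j. a j \<noteq> None})" using finA by (simp add: card_mono)
  also have "\<dots> \<le> card {j. a j \<noteq> None}" using finA card_image_le by blast
  finally have "real (card (others a i)) \<le> real k / 3"
    using count_assigned[OF inv bd] by linarith
  moreover have "real (pattern_size (pat k \<rho> i)) \<le> real k / 3"
    using inv ai unfolding pat_size Inv_def by auto
  ultimately have "\<exists>u \<in> common_nbhd k E (others a i). consistent (pat k \<rho> i) u"
    using P U pat_pat unfolding propertyP_def by blast
  then show ?thesis unfolding chooseV_def by (rule someI2_bex) auto
qed


lemma InvI:
  "finite (dom \<rho>) \<Longrightarrow>
   (\<And>i w. a i = Some w \<Longrightarrow> w \<in> vertices k \<and> (\<forall>b<k. \<rho> (i, b) = None \<or> \<rho> (i, b) = Some (w ! b))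
        \<and> real k / 3 < real (sz k \<rho> i)) \<Longrightarrow>
   (\<And>i. a i = None \<Longrightarrow> real (sz k \<rho> i) \<le> real k / 3) \<Longrightarrow>
   (\<And>i j u v. i \<noteq> j \<Longrightarrow> a i = Some u \<Longrightarrow> a j = Some v \<Longrightarrow> E u v) \<Longrightarrow> Inv k E a \<rho>"
  unfolding Inv_def by blast

lemma inv_query:
  assumes inv: "Inv k E a \<rho>" and bd: "real (card (dom \<rho>)) \<le> real k ^ 2 / 9"
    and G: "is_graph k E" and P: "propertyP k E"
  shows "Inv k E (nasg k E a \<rho> x) (\<rho>(x := Some (ans k E a \<rho> x)))"
proof -
  obtain i b where x: "x = (i, b)" by (cases x)
  have fin: "finite (dom \<rho>)" and I1: "\<And>i w. a i = Some w \<Longrightarrow> w \<in> vertices k \<and> (\<forall>b<k. \<rho> (i, b) = None \<or> \<rho> (i, b) = Some (w ! b))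
        \<and> real k / 3 < real (sz k \<rho> i)"
    and I2: "\<And>i. a i = None \<Longrightarrow> real (sz k \<rho> i) \<le> real k / 3"
    and I3: "\<And>i j u v. i \<noteq> j \<Longrightarrow> a i = Some u \<Longrightarrow> a j = Some v \<Longrightarrow> E u v"
    using inv unfolding Inv_def by blast+
  show ?thesis
  proof (cases "trig k a \<rho> x")
    case True
    define w0 where "w0 = chooseV k E a \<rho> i"
    have tr: "a i = None" "b < k" "\<rho> (i, b) = None" "real k / 3 < real (sz k \<rho> i + 1)"
      using True x unfolding trig_def by auto
    have ch: "w0 \<in> common_nbhd k E (others a i)" "consistent (pat k \<rho> i) w0"
      using choose_ok[OF inv bd P tr(1)] unfolding w0_def by auto
    have w0v: "w0 \<in> vertices k" using ch(1) unfolding common_nbhd_def by auto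
    have w0E: "\<And>v. v \<in> others a i \<Longrightarrow> E w0 v" using ch(1) unfolding common_nbhd_def by auto
    have w0c: "\<forall>b<k. \<rho> (i, b) = None \<or> \<rho> (i, b) = Some (w0 ! b)" using ch(2) pat_cons by blast
    have na: "nasg k E a \<rho> x = a(i := Some w0)" using True x unfolding nasg_def w0_def by simp
    have an: "ans k E a \<rho> x = w0 ! b" unfolding ans_def na using x by simp
    define \<rho>' where "\<rho>' = \<rho>((i, b) := Some (w0 ! b))"
    have szi: "sz k \<rho>' i = sz k \<rho> i + 1" unfolding \<rho>'_def using sz_ins tr by blast
    have szo: "\<And>j. j \<noteq> i \<Longrightarrow> sz k \<rho>' j = sz k \<rho> j" unfolding \<rho>'_def using sz_other by blast
    have "Inv k E (a(i := Some w0)) \<rho>'"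
    proof (rule InvI)
      show "finite (dom \<rho>')" using fin unfolding \<rho>'_def by simp
    next
      fix j w assume h: "(a(i := Some w0)) j = Some w"
      show "w \<in> vertices k \<and> (\<forall>b<k. \<rho>' (j, b) = None \<or> \<rho>' (j, b) = Some (w ! b)) \<and> real k / 3 < real (sz k \<rho>' j)"
      proof (cases "j = i")
        case True
        then show ?thesis using h w0v w0c szi tr(4) unfolding \<rho>'_def by auto
      next
        case False
        then show ?thesis using h I1[of j w] szo[OF False] unfolding \<rho>'_def by auto
      qed
    next
      fix j assume h: "(a(i := Some w0)) j = None"
      then have "j \<noteq> i" by auto
      then show "real (sz k \<rho>' j) \<le> real k / 3" using h I2[of j] szo by auto
    next
      fix j j' u v assume h: "j \<noteq> j'" "(a(i := Some w0)) j = Some u" "(a(i := Some w0)) j' = Some v"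
      show "E u v"
      proof (cases "j = i")
        case True
        then have "j' \<noteq> i" "u = w0" "a j' = Some v" using h by auto
        then have "v \<in> others a i" unfolding others_def by auto
        then show ?thesis using w0E \<open>u = w0\<close> by auto
      next
        case False
        show ?thesis
        proof (cases "j' = i")
          case True
          then have "v = w0" "a j = Some u" using h False by auto
          then have uo: "u \<in> others a i" unfolding others_def using False by auto
          then have "E w0 u" using w0E by auto
          moreover have "u \<in> vertices k" using uo others_def I1 by auto
          ultimately show ?thesis using G w0v \<open>v = w0\<close> unfolding is_graph_def by blast
        next
          case False2: False
          then show ?thesis using h False I3 by auto
        qed
      qed
    qed
    then show ?thesis using na an x \<rho>'_def by simp
  next
    case False
    have na: "nasg k E a \<rho> x = a" using False unfolding nasg_def by simp
    have fx: "fst x = i" "snd x = b" using x by auto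
    define v where "v = (case a i of None \<Rightarrow> False | Some w \<Rightarrow> w ! b)"
    have an: "ans k E a \<rho> x = v" unfolding ans_def na v_def fx by simp
    define \<rho>' where "\<rho>' = \<rho>((i, b) := Some v)"
    have szo: "\<And>j. j \<noteq> i \<Longrightarrow> sz k \<rho>' j = sz k \<rho> j" unfolding \<rho>'_def using sz_other by blast
    have szm: "sz k \<rho> i \<le> sz k \<rho>' i" unfolding \<rho>'_def by (rule sz_mono) auto
    have "Inv k E a \<rho>'"
    proof (rule InvI)
      show "finite (dom \<rho>')" using fin unfolding \<rho>'_def by simp
    next
      fix j w assume h: "a j = Some w"
      show "w \<in> vertices k \<and> (\<forall>b<k. \<rho>' (j, b) = None \<or> \<rho>' (j, b) = Some (w ! b)) \<and> real k / 3 < real (sz k \<rho>' j)"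
      proof (cases "j = i")
        case True
        then show ?thesis using h I1[of j w] szm unfolding \<rho>'_def v_def by auto
      next
        case False
        then show ?thesis using h I1[of j w] szo[OF False] unfolding \<rho>'_def by auto
      qed
    next
      fix j assume h: "a j = None"
      show "real (sz k \<rho>' j) \<le> real k / 3"
      proof (cases "j = i")
        case True
        show ?thesis
        proof (cases "b < k \<and> \<rho> (i, b) = None")
          case True2: True
          then have "sz k \<rho>' i = sz k \<rho> i + 1" unfolding \<rho>'_def using sz_ins by blast
          moreover have "\<not> real k / 3 < real (sz k \<rho> i + 1)" using False True2 h True x unfolding trig_def by auto
          ultimately show ?thesis using True by simp
        next
          case False2: False
          then have "sz k \<rho>' i = sz k \<rho> i" unfolding \<rho>'_def using sz_same by blast
          then show ?thesis using True I2 h by simp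
        qed
      next
        case False
        then show ?thesis using h I2[of j] szo by auto
      qed
    next
      fix j j' u v assume "j \<noteq> j'" "a j = Some u" "a j' = Some v"
      then show "E u v" using I3 by blast
    qed
    then show ?thesis using na an x \<rho>'_def by simp
  qed
qed


lemma inv_delete:
  assumes inv: "Inv k E a \<rho>"
  shows "Inv k E (delA k (\<rho>(x := None)) x a) (\<rho>(x := None))"
proof -
  obtain i b where x: "x = (i, b)" by (cases x)
  have fin: "finite (dom \<rho>)" and I1: "\<And>i w. a i = Some w \<Longrightarrow> w \<in> vertices k \<and> (\<forall>b<k. \<rho> (i, b) = None \<or> \<rho> (i, b) = Some (w ! b))
        \<and> real k / 3 < real (sz k \<rho> i)"
    and I2: "\<And>i. a i = None \<Longrightarrow> real (sz k \<rho> i) \<le> real k / 3"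
    and I3: "\<And>i j u v. i \<noteq> j \<Longrightarrow> a i = Some u \<Longrightarrow> a j = Some v \<Longrightarrow> E u v"
    using inv unfolding Inv_def by blast+
  define \<rho>' where "\<rho>' = \<rho>((i, b) := None)"
  define a' where "a' = delA k \<rho>' x a"
  have a'D: "a' = (if real (sz k \<rho>' i) \<le> real k / 3 then a(i := None) else a)"
    unfolding a'_def delA_def x by simp
  have a'sub: "\<And>j w. a' j = Some w \<Longrightarrow> a j = Some w" unfolding a'D by (auto split: if_splits)
  have szo: "\<And>j. j \<noteq> i \<Longrightarrow> sz k \<rho>' j = sz k \<rho> j" unfolding \<rho>'_def sz_def by simp
  have szm: "\<And>j. sz k \<rho>' j \<le> sz k \<rho> j" unfolding \<rho>'_def by (rule sz_mono) (auto split: if_splits)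
  have "Inv k E a' \<rho>'"
  proof (rule InvI)
    show "finite (dom \<rho>')" using fin unfolding \<rho>'_def by simp
  next
    fix j w assume h: "a' j = Some w"
    then have aj: "a j = Some w" by (rule a'sub)
    have big: "real k / 3 < real (sz k \<rho>' j)"
    proof (cases "j = i")
      case True then show ?thesis using h unfolding a'D by (auto split: if_splits)
    next
      case False then show ?thesis using I1[OF aj] szo by auto
    qed
    then show "w \<in> vertices k \<and> (\<forall>b<k. \<rho>' (j, b) = None \<or> \<rho>' (j, b) = Some (w ! b)) \<and> real k / 3 < real (sz k \<rho>' j)"
      using I1[OF aj] unfolding \<rho>'_def by auto
  next
    fix j assume h: "a' j = None"
    show "real (sz k \<rho>' j) \<le> real k / 3"
    proof (cases "j = i")
      case True
      show ?thesis
      proof (cases "real (sz k \<rho>' i) \<le> real k / 3")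
        case True2: True then show ?thesis using True by simp
      next
        case False
        then have "a j = None" using h True unfolding a'D by simp
        then show ?thesis using I2 szm[of j] by (meson of_nat_le_iff order_trans)
      qed
    next
      case False
      then have "a j = None" using h unfolding a'D by (auto split: if_splits)
      then show ?thesis using I2 szm[of j] by (meson of_nat_le_iff order_trans)
    qed
  next
    fix j j' u v assume "j \<noteq> j'" "a' j = Some u" "a' j' = Some v"
    then show "E u v" using I3 a'sub by blast
  qed
  then show ?thesis using a'_def \<rho>'_def x by simp
qed

lemma block_eq:
  assumes inv: "Inv k E a \<rho>" and u: "u \<in> vertices k" and k: "0 < k"
    and h: "\<forall>b<k. \<rho> (i, b) = Some (u ! b)"
  shows "a i = Some u"
proof -
  have "{b. b < k \<and> \<rho> (i, b) \<noteq> None} = {..<k}" using h by auto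
  then have "sz k \<rho> i = k" unfolding sz_def by simp
  then have "\<not> real (sz k \<rho> i) \<le> real k / 3" using k by simp
  then obtain w where w: "a i = Some w" using inv unfolding Inv_def by (cases "a i") auto
  then have wv: "w \<in> vertices k" and wc: "\<forall>b<k. \<rho> (i, b) = None \<or> \<rho> (i, b) = Some (w ! b)"
    using inv unfolding Inv_def by blast+
  have "w = u"
  proof (rule nth_equalityI)
    show "length w = length u" using wv u unfolding vertices_def by simp
  next
    fix b assume "b < length w"
    then have "b < k" using wv unfolding vertices_def by simp
    then show "w ! b = u ! b" using h wc by fastforce
  qed
  then show ?thesis using w by simp
qed

lemma fals_pair:
  "falsifies \<rho> (pair_clause k i u j v) \<Longrightarrow> (\<forall>b<k. \<rho> (i, b) = Some (u ! b)) \<and> (\<forall>b<k. \<rho> (j, b) = Some (v ! b))"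
proof -
  assume f: "falsifies \<rho> (pair_clause k i u j v)"
  have "\<rho> (i, b) = Some (u ! b)" if "b < k" for b
  proof -
    have "((i, b), \<not> u ! b) \<in> pair_clause k i u j v" unfolding pair_clause_def using that by blast
    then show ?thesis using f unfolding falsifies_def by fastforce
  qed
  moreover have "\<rho> (j, b) = Some (v ! b)" if "b < k" for b
  proof -
    have "((j, b), \<not> v ! b) \<in> pair_clause k i u j v" unfolding pair_clause_def using that by blast
    then show ?thesis using f unfolding falsifies_def by fastforce
  qed
  ultimately show ?thesis by blast
qed

lemma nowin:
  assumes inv: "Inv k E a \<rho>" and G: "is_graph k E" and k: "0 < k" and C: "C \<in> clique_cnf k m E"
  shows "\<not> falsifies \<rho> C"
proof
  assume f: "falsifies \<rho> C"
  have irr: "\<And>v. v \<in> vertices k \<Longrightarrow> \<not> E v v" using G unfolding is_graph_def by blast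
  have I3: "\<And>i j u v. i \<noteq> j \<Longrightarrow> a i = Some u \<Longrightarrow> a j = Some v \<Longrightarrow> E u v"
    using inv unfolding Inv_def by blast
  from C consider (A) v i j where "C = pair_clause k i v j v" "v \<in> vertices k" "i \<noteq> j"
    | (B) u v i j where "C = pair_clause k i u j v" "u \<in> vertices k" "v \<in> vertices k" "\<not> E u v" "i \<noteq> j"
    unfolding clique_cnf_def by blast
  then show False
  proof cases
    case A
    then have "a i = Some v" "a j = Some v" using block_eq[OF inv _ k] fals_pair f by metis+
    then show False using I3 A irr by blast
  next
    case B
    then have "a i = Some u" "a j = Some v" using block_eq[OF inv _ k] fals_pair f by metis+
    then show False using I3 B by blast
  qed
qed


lemma advS_snoc: "advS k E (h @ [e]) = stp k E (advS k E h) e"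
  unfolding advS_def by simp

lemma inv_init: "Inv k E (\<lambda>_. None) Map.empty"
  unfolding Inv_def sz_def by simp

theorem mainTheorem6:
  fixes c :: real and k m :: nat and E :: "bool list \<Rightarrow> bool list \<Rightarrow> bool"
  assumes "c > 0"
    and "real m = c * real k"
    and "is_graph k E"
    and "propertyP k E"
  shows "\<exists>A :: (nat \<times> nat) adversary. \<forall>P :: (nat \<times> nat) prover.
           memory_bounded (clique_cnf k m E) (real k ^ 2 / 9) P A \<longrightarrow>
           adversary_wins (clique_cnf k m E) P A"
proof (intro exI allI impI)
  fix P :: "(nat \<times> nat) prover"
  let ?A = "adv k E" and ?\<phi> = "clique_cnf k m E"
  assume mb: "memory_bounded ?\<phi> (real k ^ 2 / 9) P ?A"
  show "adversary_wins ?\<phi> P ?A"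
  proof (cases "k = 0")
    case True
    then have "m = 0" using assms(2) by simp
    then have "?\<phi> = {}" unfolding clique_cnf_def by simp
    then show ?thesis unfolding adversary_wins_def prover_wins_at_def by simp
  next
    case False
    then have k: "0 < k" by simp
    define S where "S t = advS k E (play P ?A t)" for t
    have memS: "memory (play P ?A t) = snd (S t)" for t unfolding S_def advS_mem ..
    have nw: "\<not> prover_wins_at ?\<phi> P ?A t" if "Inv k E (fst (S t)) (snd (S t))" for t
      unfolding prover_wins_at_def memS using nowin[OF that assms(3) k] by blast
    have step: "Inv k E (fst (S (Suc t))) (snd (S (Suc t)))"
      if inv: "Inv k E (fst (S t)) (snd (S t))" and bd: "real (card (dom (snd (S t)))) \<le> real k ^ 2 / 9" for t
    proof -
      obtain a \<rho> where ar: "S t = (a, \<rho>)" by (cases "S t")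
      have inv': "Inv k E a \<rho>" and bd': "real (card (dom \<rho>)) \<le> real k ^ 2 / 9" using inv bd ar by auto
      have Ssuc: "S (Suc t) = stp k E (a, \<rho>) (respond ?A (play P ?A t) (P (play P ?A t)))"
        unfolding S_def using ar[unfolded S_def] by (simp add: advS_snoc)
      show ?thesis
      proof (cases "P (play P ?A t)")
        case (Query x)
        have "?A (play P ?A t) x = ans k E a \<rho> x"
          by (simp only: adv_def[of k E "play P ?A t" x] ar[unfolded S_def] fst_conv snd_conv)
        then have "S (Suc t) = (nasg k E a \<rho> x, \<rho>(x := Some (ans k E a \<rho> x)))" using Ssuc Query by simp
        then show ?thesis using inv_query[OF inv' bd' assms(3) assms(4)] by simp
      next
        case (Delete x)
        then have "S (Suc t) = (delA k (\<rho>(x := None)) x a, \<rho>(x := None))" using Ssuc by simp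
        then show ?thesis using inv_delete[OF inv'] by simp
      qed
    qed
    have key: "\<forall>t'\<le>t. Inv k E (fst (S t')) (snd (S t'))" for t
    proof (induction t)
      case 0 then show ?case unfolding S_def advS_def using inv_init by simp
    next
      case (Suc t)
      have "\<forall>s<t. \<not> prover_wins_at ?\<phi> P ?A s" using Suc nw by simp
      then have "real (card (dom (snd (S t)))) \<le> real k ^ 2 / 9"
        using mb unfolding memory_bounded_def memS by blast
      then have "Inv k E (fst (S (Suc t))) (snd (S (Suc t)))" using step Suc by simp
      then show ?case using Suc le_Suc_eq by auto
    qed
    show ?thesis unfolding adversary_wins_def using nw key by blast
  qed
qed

end
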